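(* Let $G=(V,E)$ be connected with $n\ge3$ vertices. Then $\mathrm{bc}(u)=0$ for every $u\in V_1$, and for every $u\in V_{\ge2}$ and every $s\in V\setminus\{u\}$: (a) if $s\in V_{\ge2}$, then $\delta_s(u)=\tilde\delta_s(u)+\zeta_s(u)+\mathrm{deg}_1(u)$; (b) if $s\in V_1$ and $s$ is not adjacent to $u$, with unique neighbor $y$, then $\delta_s(u)=\tilde\delta_y(u)+\zeta_y(u)+\mathrm{deg}_1(u)$; (c) if $s\in V_1$ and $s$ is adjacent to $u$, then $\delta_s(u)=n-2$. Consequently $\mathrm{bc}(u)=\frac{1}{(n-1)(n-2)}\sum_{s\in V\setminus\{u\}}\delta_s(u)$ is determined by these values.
   Context: Graphs are finite, simple, undirected, unweighted. In a graph, $\sigma_{st}$ is the number of shortest $s$–$t$ paths and $\sigma_{st}(v)$ the number through $v\notin\{s,t\}$; $\delta_s(v)=\sum_{t\in V,\ t\ne s,v}\sigma_{st}(v)/\sigma_{st}$ (computed in $G$), and $\mathrm{bc}(v)=\frac{1}{(n-1)(n-2)}\sum_{s\ne v}\delta_s(v)$. $V_1$ is the set of degree-1 vertices of $G$, $V_{\ge2}=V\setminus V_1$, $\tilde G$ the subgraph induced by $V_{\ge2}$, with counts $\tilde\sigma$. For $t\in V$, $\mathrm{deg}_1(t)$ is the number of neighbors of $t$ of degree 1 in $G$. For $s,u\in V_{\ge2}$: $\tilde\delta_s(u)=\sum_{t\in V_{\ge2},t\neq s,u}\tilde\sigma_{st}(u)/\tilde\sigma_{st}$ and $\zeta_s(u)=\sum_{t\in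 V_{\ge2},\,t\ne s,u}\mathrm{deg}_1(t)\,\tilde\sigma_{st}(u)/\tilde\sigma_{st}$; set $\tilde\delta_u(u)=\zeta_u(u)=0$. *)

theory Defs
  imports Complex_Main
begin

definition simple_graph :: "'a set \<Rightarrow> ('a \<Rightarrow> 'a \<Rightarrow> bool) \<Rightarrow> bool" where
  "simple_graph V E \<longleftrightarrow> finite V \<and> (\<forall>x y. E x y \<longrightarrow> E y x) \<and> (\<forall>x. \<not> E x x)
     \<and> (\<forall>x y. E x y \<longrightarrow> x \<in> V \<and> y \<in> V)"

definition is_walk :: "'a set \<Rightarrow> ('a \<Rightarrow> 'a \<Rightarrow> bool) \<Rightarrow> 'a \<Rightarrow> 'a \<Rightarrow> 'a list \<Rightarrow> bool" where
  "is_walk V E s t p \<longleftrightarrow> p \<noteq> [] \<and> hd p = s \<and> last p = t \<and> set p \<subseteq> V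
     \<and> (\<forall>i. Suc i < length p \<longrightarrow> E (p ! i) (p ! Suc i))"

definition shortest_paths :: "'a set \<Rightarrow> ('a \<Rightarrow> 'a \<Rightarrow> bool) \<Rightarrow> 'a \<Rightarrow> 'a \<Rightarrow> 'a list set" where
  "shortest_paths V E s t = {p. is_walk V E s t p \<and> (\<forall>q. is_walk V E s t q \<longrightarrow> length p \<le> length q)}"

definition connected_graph :: "'a set \<Rightarrow> ('a \<Rightarrow> 'a \<Rightarrow> bool) \<Rightarrow> bool" where
  "connected_graph V E \<longleftrightarrow> (\<forall>s\<in>V. \<forall>t\<in>V. \<exists>p. is_walk V E s t p)"

definition sigma :: "'a set \<Rightarrow> ('a \<Rightarrow> 'a \<Rightarrow> bool) \<Rightarrow> 'a \<Rightarrow> 'a \<Rightarrow> nat" where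
  "sigma V E s t = card (shortest_paths V E s t)"

definition sigma_via :: "'a set \<Rightarrow> ('a \<Rightarrow> 'a \<Rightarrow> bool) \<Rightarrow> 'a \<Rightarrow> 'a \<Rightarrow> 'a \<Rightarrow> nat" where
  "sigma_via V E s t v = card {p \<in> shortest_paths V E s t. v \<in> set p}"

definition delta :: "'a set \<Rightarrow> ('a \<Rightarrow> 'a \<Rightarrow> bool) \<Rightarrow> 'a \<Rightarrow> 'a \<Rightarrow> real" where
  "delta V E s v = (\<Sum>t\<in>V - {s, v}. real (sigma_via V E s t v) / real (sigma V E s t))"

definition bc :: "'a set \<Rightarrow> ('a \<Rightarrow> 'a \<Rightarrow> bool) \<Rightarrow> 'a \<Rightarrow> real" where
  "bc V E v = 1 / ((real (card V) - 1) * (real (card V) - 2)) * (\<Sum>s\<in>V - {v}. delta V E s v)"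

definition degree :: "'a set \<Rightarrow> ('a \<Rightarrow> 'a \<Rightarrow> bool) \<Rightarrow> 'a \<Rightarrow> nat" where
  "degree V E v = card {w \<in> V. E v w}"

definition V1 :: "'a set \<Rightarrow> ('a \<Rightarrow> 'a \<Rightarrow> bool) \<Rightarrow> 'a set" where
  "V1 V E = {v \<in> V. degree V E v = 1}"

definition V2 :: "'a set \<Rightarrow> ('a \<Rightarrow> 'a \<Rightarrow> bool) \<Rightarrow> 'a set" where
  "V2 V E = V - V1 V E"

definition deg1 :: "'a set \<Rightarrow> ('a \<Rightarrow> 'a \<Rightarrow> bool) \<Rightarrow> 'a \<Rightarrow> nat" where
  "deg1 V E t = card {w \<in> V. E t w \<and> degree V E w = 1}"

definition tdelta :: "'a set \<Rightarrow> ('a \<Rightarrow> 'a \<Rightarrow> bool) \<Rightarrow> 'a \<Rightarrow> 'a \<Rightarrow> real" where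
  "tdelta V E s u = (if s = u then 0 else
     (\<Sum>t\<in>V2 V E - {s, u}. real (sigma_via (V2 V E) E s t u) / real (sigma (V2 V E) E s t)))"

definition zeta :: "'a set \<Rightarrow> ('a \<Rightarrow> 'a \<Rightarrow> bool) \<Rightarrow> 'a \<Rightarrow> 'a \<Rightarrow> real" where
  "zeta V E s u = (if s = u then 0 else
     (\<Sum>t\<in>V2 V E - {s, u}. real (deg1 V E t) * real (sigma_via (V2 V E) E s t u)
                                / real (sigma (V2 V E) E s t)))"

end

theory Submission imports Defs begin


lemma walk_iff: "is_walk V E s t p \<longleftrightarrow> p \<noteq> [] \<and> hd p = s \<and> last p = t \<and> set p \<subseteq> V \<and> successively E p"
  by (simp add: is_walk_def successively_conv_nth)

lemma sp_iff: "p \<in> shortest_paths V E s t \<longleftrightarrow> is_walk V E s t p \<and> (\<forall>q. is_walk V E s t q \<longrightarrow> length p \<le> length q)"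
  by (simp add: shortest_paths_def)

lemma G_sym: "simple_graph V E \<Longrightarrow> E x y \<Longrightarrow> E y x"
  by (simp add: simple_graph_def)
lemma G_in: "simple_graph V E \<Longrightarrow> E x y \<Longrightarrow> x \<in> V \<and> y \<in> V"
  by (simp add: simple_graph_def)
lemma G_fin: "simple_graph V E \<Longrightarrow> finite V"
  by (simp add: simple_graph_def)

lemma V1_nb: assumes "v \<in> V1 V E" shows "\<exists>y. {w\<in>V. E v w} = {y}"
  using assms by (auto simp: V1_def degree_def card_1_singleton_iff)

lemma V1_unique: assumes G: "simple_graph V E" and v: "v \<in> V1 V E" and va: "E v a" and vb: "E v b" shows "a = b"
proof -
  obtain y where eq: "{w\<in>V. E v w} = {y}" using V1_nb[OF v] by blast
  have "a \<in> V" using G_in[OF G va] by simp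
  then have "a \<in> {w\<in>V. E v w}" using va by simp
  then have "a = y" unfolding eq by simp
  have "b \<in> V" using G_in[OF G vb] by simp
  then have "b \<in> {w\<in>V. E v w}" using vb by simp
  then have "b = y" unfolding eq by simp
  then show ?thesis using \<open>a = y\<close> by simp
qed

lemma walk_cons_V1: assumes G: "simple_graph V E" and v: "v \<in> V1 V E" and vy: "E v y" and tv: "t \<noteq> v"
  shows "is_walk V E v t p \<longleftrightarrow> (\<exists>q. p = v # q \<and> is_walk V E y t q)"
proof
  assume w: "is_walk V E v t p"
  then obtain q where p: "p = v # q" unfolding walk_iff by (cases p) auto
  have "q \<noteq> []" using w tv p unfolding walk_iff by auto
  then have "E v (hd q)" "successively E q" using w p unfolding walk_iff by (auto simp: successively_Cons)
  then have "hd q = y" using V1_unique[OF G v] vy by blast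
  then show "\<exists>q. p = v # q \<and> is_walk V E y t q" using w p \<open>q \<noteq> []\<close> \<open>successively E q\<close>
    unfolding walk_iff by auto
next
  assume "\<exists>q. p = v # q \<and> is_walk V E y t q"
  then obtain q where p: "p = v # q" and q: "is_walk V E y t q" by blast
  have "v \<in> V" using v by (simp add: V1_def)
  then show "is_walk V E v t p" using p q vy unfolding walk_iff by (auto simp: successively_Cons)
qed

lemma walk_snoc: "is_walk V E s y q \<Longrightarrow> v \<in> V \<Longrightarrow> E y v \<Longrightarrow> is_walk V E s v (q @ [v])"
  by (auto simp: walk_iff successively_append_iff)

lemma walk_snoc_V1: assumes G: "simple_graph V E" and v: "v \<in> V1 V E" and vy: "E v y" and sv: "s \<noteq> v"
  shows "is_walk V E s v p \<longleftrightarrow> (\<exists>q. p = q @ [v] \<and> is_walk V E s y q)"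
proof
  assume w: "is_walk V E s v p"
  define q where "q = butlast p"
  have p: "p = q @ [v]" using w unfolding walk_iff q_def by (metis append_butlast_last_id)
  have qne: "q \<noteq> []" using w sv p unfolding walk_iff by auto
  have "E (last q) v" "successively E q" using w p qne unfolding walk_iff by (auto simp: successively_append_iff)
  then have "last q = y" using V1_unique[OF G v vy G_sym[OF G \<open>E (last q) v\<close>]] by simp
  then show "\<exists>q. p = q @ [v] \<and> is_walk V E s y q" using w p qne \<open>successively E q\<close>
    unfolding walk_iff by auto
next
  assume "\<exists>q. p = q @ [v] \<and> is_walk V E s y q"
  then obtain q where p: "p = q @ [v]" and q: "is_walk V E s y q" by blast
  have "v \<in> V" using v by (simp add: V1_def)
  moreover have "E y v" using G_sym[OF G vy] .
  ultimately show "is_walk V E s v p" unfolding p by (rule walk_snoc[OF q])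
qed

lemma sp_image:
  assumes "\<And>p. is_walk V E s t p \<longleftrightarrow> (\<exists>q. p = f q \<and> is_walk V E s' t' q)"
    and "\<And>q. length (f q) = Suc (length q)"
  shows "shortest_paths V E s t = f ` shortest_paths V E s' t'"
proof
  show "shortest_paths V E s t \<subseteq> f ` shortest_paths V E s' t'"
  proof
    fix p assume "p \<in> shortest_paths V E s t"
    then have w: "is_walk V E s t p" and m: "\<forall>q. is_walk V E s t q \<longrightarrow> length p \<le> length q"
      by (auto simp: sp_iff)
    obtain q where p: "p = f q" and q: "is_walk V E s' t' q" using w assms(1) by blast
    have "\<forall>q'. is_walk V E s' t' q' \<longrightarrow> length q \<le> length q'"
      using m assms p by (metis Suc_le_mono)
    then show "p \<in> f ` shortest_paths V E s' t'" using p q by (auto simp: sp_iff)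
  qed
next
  show "f ` shortest_paths V E s' t' \<subseteq> shortest_paths V E s t"
  proof
    fix p assume "p \<in> f ` shortest_paths V E s' t'"
    then obtain q where p: "p = f q" and q: "is_walk V E s' t' q"
      and m: "\<forall>q'. is_walk V E s' t' q' \<longrightarrow> length q \<le> length q'" by (auto simp: sp_iff)
    have w: "is_walk V E s t p" using assms(1) p q by blast
    have "\<forall>p'. is_walk V E s t p' \<longrightarrow> length p \<le> length p'"
      using m assms p by (metis Suc_le_mono)
    then show "p \<in> shortest_paths V E s t" using w by (auto simp: sp_iff)
  qed
qed

lemma sp_cons_V1: assumes "simple_graph V E" "v \<in> V1 V E" "E v y" "t \<noteq> v"
  shows "shortest_paths V E v t = (#) v ` shortest_paths V E y t"
  by (rule sp_image[where f="(#) v"]) (simp_all add: walk_cons_V1[OF assms])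

lemma sp_snoc_V1: assumes "simple_graph V E" "v \<in> V1 V E" "E v y" "s \<noteq> v"
  shows "shortest_paths V E s v = (\<lambda>q. q @ [v]) ` shortest_paths V E s y"
  by (rule sp_image[where f="\<lambda>q. q @ [v]"]) (simp_all add: walk_snoc_V1[OF assms])

lemma sp_self: assumes "s \<in> V" shows "shortest_paths V E s s = {[s]}"
proof -
  have w1: "is_walk V E s s [s]" using assms by (simp add: walk_iff)
  have "p = [s]" if "p \<in> shortest_paths V E s s" for p
  proof -
    have "length p \<le> length [s]" using that w1 unfolding sp_iff by blast
    moreover have "p \<noteq> []" "hd p = s" using that by (auto simp: sp_iff walk_iff)
    ultimately show ?thesis by (cases p) auto
  qed
  moreover have "[s] \<in> shortest_paths V E s s" using w1 by (auto simp: sp_iff walk_iff Suc_le_eq)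
  ultimately show ?thesis by blast
qed


lemma sp_internal: assumes G: "simple_graph V E" and p: "p \<in> shortest_paths V E s t"
  and vp: "v \<in> set p" and vs: "v \<noteq> s" and vt: "v \<noteq> t" shows "v \<notin> V1 V E"
proof
  assume v1: "v \<in> V1 V E"
  have w: "is_walk V E s t p" and m: "\<forall>q. is_walk V E s t q \<longrightarrow> length p \<le> length q"
    using p by (simp_all add: sp_iff)
  obtain xs ys where pe: "p = xs @ v # ys" using split_list[OF vp] by blast
  have wp: "p \<noteq> []" "hd p = s" "last p = t" "set p \<subseteq> V" "successively E p"
    using w by (simp_all add: walk_iff)
  have xne: "xs \<noteq> []" using wp(2) pe vs by (cases xs) auto
  have yne: "ys \<noteq> []" using wp(3) pe vt by (cases ys) auto
  then obtain b ys' where ye: "ys = b # ys'" by (cases ys) auto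
  have sx: "successively E xs" and ea: "E (last xs) v" and svy: "successively E (v # ys)"
    using wp(5) pe xne by (simp_all add: successively_append_iff)
  have eb: "E v b" and sy: "successively E (b # ys')" using svy ye by simp_all
  have ab: "last xs \<noteq> b"
  proof
    assume eq: "last xs = b"
    define q where "q = xs @ ys'"
    have qne: "q \<noteq> []" using xne q_def by simp
    have hq: "hd q = s" using wp(2) pe xne q_def by simp
    have lq: "last q = t"
    proof (cases "ys' = []")
      case True
      then have "last p = b" using pe ye by simp
      then show ?thesis using True q_def eq wp(3) by simp
    next
      case False
      then have "last p = last ys'" using pe ye by simp
      then show ?thesis using False q_def wp(3) by simp
    qed
    have sq: "set q \<subseteq> V" using wp(4) pe ye q_def by auto
    have sys': "successively E ys'" using sy by (cases ys') simp_all
    have "ys' \<noteq> [] \<Longrightarrow> E b (hd ys')" using sy by (cases ys') simp_all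
    then have ssq: "successively E q" using sx sys' eq xne q_def by (cases "ys' = []") (simp_all add: successively_append_iff)
    have "is_walk V E s t q" using qne hq lq sq ssq by (simp add: walk_iff)
    moreover have "length q < length p" using pe ye q_def by simp
    ultimately show False using m by fastforce
  qed
  then show False using V1_unique[OF G v1 G_sym[OF G ea] eb] by simp
qed

lemma sp_ne: assumes "connected_graph V E" "s \<in> V" "t \<in> V" shows "shortest_paths V E s t \<noteq> {}"
proof -
  obtain p where "is_walk V E s t p" using assms unfolding connected_graph_def by blast
  then obtain p0 where "is_walk V E s t p0 \<and> (\<forall>q. is_walk V E s t q \<longrightarrow> length p0 \<le> length q)"
    using ex_has_least_nat[of "is_walk V E s t" p length] by blast
  then have "p0 \<in> shortest_paths V E s t" by (simp add: sp_iff)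
  then show ?thesis by auto
qed

lemma sp_fin: assumes "finite V" shows "finite (shortest_paths V E s t)"
proof (cases "shortest_paths V E s t = {}")
  case False then obtain p0 where p0: "p0 \<in> shortest_paths V E s t" by blast
  have "shortest_paths V E s t \<subseteq> {xs. set xs \<subseteq> V \<and> length xs \<le> length p0}"
  proof
    fix p assume p: "p \<in> shortest_paths V E s t"
    have "is_walk V E s t p0" using p0 by (simp add: sp_iff)
    then have "length p \<le> length p0" using p by (simp add: sp_iff)
    moreover have "set p \<subseteq> V" using p by (simp add: sp_iff walk_iff)
    ultimately show "p \<in> {xs. set xs \<subseteq> V \<and> length xs \<le> length p0}" by simp
  qed
  then show ?thesis using finite_lists_length_le[OF assms] by (rule finite_subset)
qed simp

lemma sigma_pos: assumes "simple_graph V E" "connected_graph V E" "s \<in> V" "t \<in> V"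
  shows "0 < sigma V E s t"
  unfolding sigma_def using sp_ne[OF assms(2-4)] sp_fin[OF G_fin[OF assms(1)]] by (simp add: card_gt_0_iff)

lemma sp_V2: assumes G: "simple_graph V E" and C: "connected_graph V E"
  and s: "s \<in> V2 V E" and t: "t \<in> V2 V E"
  shows "shortest_paths (V2 V E) E s t = shortest_paths V E s t"
proof -
  have V2sub: "V2 V E \<subseteq> V" by (auto simp: V2_def)
  have inV2: "set p \<subseteq> V2 V E" if pp: "p \<in> shortest_paths V E s t" for p
  proof
    fix x assume x: "x \<in> set p"
    have "x \<in> V" using pp x by (auto simp: sp_iff walk_iff)
    show "x \<in> V2 V E"
    proof (cases "x = s \<or> x = t")
      case True then show ?thesis using s t by auto
    next
      case False then have "x \<notin> V1 V E" using sp_internal[OF G pp x] by auto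
      then show ?thesis using \<open>x \<in> V\<close> by (simp add: V2_def)
    qed
  qed
  have w21: "is_walk V E s t q" if "is_walk (V2 V E) E s t q" for q
    using that V2sub by (auto simp: walk_iff)
  have w12: "is_walk (V2 V E) E s t q" if "is_walk V E s t q" "set q \<subseteq> V2 V E" for q
    using that by (auto simp: walk_iff)
  have "s \<in> V" "t \<in> V" using s t V2sub by auto
  then obtain p0 where p0: "p0 \<in> shortest_paths V E s t" using sp_ne[OF C] by blast
  have p0w: "is_walk V E s t p0" "\<forall>q. is_walk V E s t q \<longrightarrow> length p0 \<le> length q"
    using p0 by (simp_all add: sp_iff)
  show ?thesis
  proof (rule set_eqI, rule iffI)
    fix p assume p: "p \<in> shortest_paths (V2 V E) E s t"
    have wp: "is_walk V E s t p" using p w21 by (simp add: sp_iff)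
    have "is_walk (V2 V E) E s t p0" using w12[OF p0w(1) inV2[OF p0]] .
    then have "length p \<le> length p0" using p by (simp add: sp_iff)
    then have "\<forall>q. is_walk V E s t q \<longrightarrow> length p \<le> length q" using p0w(2) by fastforce
    then show "p \<in> shortest_paths V E s t" using wp by (simp add: sp_iff)
  next
    fix p assume p: "p \<in> shortest_paths V E s t"
    have "is_walk (V2 V E) E s t p" using w12 p inV2[OF p] by (simp add: sp_iff)
    moreover have "\<forall>q. is_walk (V2 V E) E s t q \<longrightarrow> length p \<le> length q"
      using p w21 by (simp add: sp_iff)
    ultimately show "p \<in> shortest_paths (V2 V E) E s t" by (simp add: sp_iff)
  qed
qed

lemma walk_closed: assumes cl: "\<And>x w. x \<in> S \<Longrightarrow> E x w \<Longrightarrow> w \<in> S"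
  shows "successively E p \<Longrightarrow> p \<noteq> [] \<Longrightarrow> hd p \<in> S \<Longrightarrow> set p \<subseteq> S"
proof (induction p)
  case Nil then show ?case by simp
next
  case (Cons a p)
  show ?case
  proof (cases "p = []")
    case True then show ?thesis using Cons.prems by simp
  next
    case False
    then have "E a (hd p)" "successively E p" using Cons.prems(1) by (simp_all add: successively_Cons)
    moreover have "a \<in> S" using Cons.prems(3) by simp
    ultimately have "hd p \<in> S" using cl by blast
    then have "set p \<subseteq> S" using Cons.IH \<open>successively E p\<close> False by blast
    then show ?thesis using \<open>a \<in> S\<close> by simp
  qed
qed

lemma nb_V2: assumes G: "simple_graph V E" and C: "connected_graph V E" and n3: "card V \<ge> 3"
  and v1: "v \<in> V1 V E" and vy: "E v y" shows "y \<in> V2 V E"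
proof (rule ccontr)
  assume "y \<notin> V2 V E"
  moreover have yV: "y \<in> V" using G_in[OF G vy] by simp
  ultimately have y1: "y \<in> V1 V E" by (simp add: V2_def)
  have vV: "v \<in> V" using G_in[OF G vy] by simp
  have cl: "w \<in> {v,y}" if "x \<in> {v,y}" "E x w" for x w
  proof -
    from that have "x = v \<or> x = y" by simp
    then show ?thesis
    proof
      assume "x = v" then have "w = y" using V1_unique[OF G v1 _ vy] that(2) by simp
      then show ?thesis by simp
    next
      assume "x = y" then have "w = v" using V1_unique[OF G y1 _ G_sym[OF G vy]] that(2) by simp
      then show ?thesis by simp
    qed
  qed
  have "card {v,y} \<le> 2" by (cases "v = y") simp_all
  then have "\<not> V \<subseteq> {v,y}" using n3 card_mono[of "{v,y}" V] by auto
  then obtain w where w: "w \<in> V" "w \<notin> {v,y}" by blast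
  obtain p where "is_walk V E v w p" using C vV w(1) unfolding connected_graph_def by blast
  then have "successively E p" "p \<noteq> []" "hd p = v" "last p = w" by (simp_all add: walk_iff)
  then have "set p \<subseteq> {v,y}" "w \<in> set p" using walk_closed[of "{v,y}" E p, OF cl] by auto
  then show False using w by blast
qed



definition rr :: "'a set \<Rightarrow> ('a \<Rightarrow> 'a \<Rightarrow> bool) \<Rightarrow> 'a \<Rightarrow> 'a \<Rightarrow> 'a \<Rightarrow> real" where
  "rr V E s t u = real (sigma_via V E s t u) / real (sigma V E s t)"

lemma delta_rr: "delta V E s u = (\<Sum>t\<in>V-{s,u}. rr V E s t u)"
  by (simp add: delta_def rr_def)

lemma rr_img: assumes sp: "shortest_paths V E s t = f ` shortest_paths V' E s' t'" and inj: "inj f"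
  and mem: "\<And>q. u \<in> set (f q) \<longleftrightarrow> u \<in> set q"
  shows "rr V E s t u = rr V' E s' t' u"
proof -
  have "sigma V E s t = sigma V' E s' t'" unfolding sigma_def sp
    by (rule card_image[OF inj_on_subset[OF inj subset_UNIV]])
  moreover have "{p \<in> shortest_paths V E s t. u \<in> set p} = f ` {q \<in> shortest_paths V' E s' t'. u \<in> set q}"
    unfolding sp using mem by auto
  then have "sigma_via V E s t u = sigma_via V' E s' t' u" unfolding sigma_via_def
    by (simp add: card_image[OF inj_on_subset[OF inj subset_UNIV]])
  ultimately show ?thesis by (simp add: rr_def)
qed

lemma rr_cons: assumes "simple_graph V E" "v \<in> V1 V E" "E v y" "t \<noteq> v" "u \<noteq> v"
  shows "rr V E v t u = rr V E y t u"
  by (rule rr_img[OF sp_cons_V1[OF assms(1-4)]]) (use assms(5) in \<open>auto simp: inj_def\<close>)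

lemma rr_snoc: assumes "simple_graph V E" "v \<in> V1 V E" "E v y" "s \<noteq> v" "u \<noteq> v"
  shows "rr V E s v u = rr V E s y u"
  by (rule rr_img[OF sp_snoc_V1[OF assms(1-4)]]) (use assms(5) in \<open>auto simp: inj_def\<close>)

lemma rr_self: assumes "s \<in> V" "u \<noteq> s" shows "rr V E s s u = 0"
  using assms by (simp add: rr_def sigma_via_def sp_self)

lemma rr_end: assumes "simple_graph V E" "connected_graph V E" "s \<in> V" "u \<in> V"
  shows "rr V E s u u = 1"
proof -
  have "{p \<in> shortest_paths V E s u. u \<in> set p} = shortest_paths V E s u"
    by (auto simp: sp_iff walk_iff)
  then have "sigma_via V E s u u = sigma V E s u" by (simp add: sigma_via_def sigma_def)
  then show ?thesis using sigma_pos[OF assms] by (simp add: rr_def)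
qed

lemma rr_start: assumes "simple_graph V E" "connected_graph V E" "u \<in> V" "t \<in> V"
  shows "rr V E u t u = 1"
proof -
  have "{p \<in> shortest_paths V E u t. u \<in> set p} = shortest_paths V E u t"
    by (auto simp: sp_iff walk_iff)
  then have "sigma_via V E u t u = sigma V E u t" by (simp add: sigma_via_def sigma_def)
  then show ?thesis using sigma_pos[OF assms] by (simp add: rr_def)
qed

lemma rr_V1: assumes "simple_graph V E" "u \<in> V1 V E" "u \<noteq> s" "u \<noteq> t"
  shows "rr V E s t u = 0"
proof -
  have "{p \<in> shortest_paths V E s t. u \<in> set p} = {}"
    using sp_internal[OF assms(1) _ _ assms(3) assms(4)] assms(2) by blast
  then have "sigma_via V E s t u = 0" unfolding sigma_via_def by (metis card.empty)
  then show ?thesis by (simp add: rr_def)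
qed

lemma rr_V2: assumes "simple_graph V E" "connected_graph V E" "s \<in> V2 V E" "t \<in> V2 V E"
  shows "rr V E s t u = rr (V2 V E) E s t u"
  unfolding rr_def sigma_def sigma_via_def sp_V2[OF assms] ..



lemma partA: assumes G: "simple_graph V E" and C: "connected_graph V E" and n3: "card V \<ge> 3"
  and u: "u \<in> V2 V E" and s: "s \<in> V2 V E" and su: "s \<noteq> u"
  shows "delta V E s u = tdelta V E s u + zeta V E s u + real (deg1 V E u)"
proof -
  have fin: "finite V" using G_fin[OF G] .
  have V2sub: "V2 V E \<subseteq> V" by (auto simp: V2_def)
  have V1sub: "V1 V E \<subseteq> V" by (auto simp: V1_def)
  have fin1: "finite (V1 V E)" using finite_subset[OF V1sub fin] .
  have fin2: "finite (V2 V E)" using finite_subset[OF V2sub fin] .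
  have s1: "s \<notin> V1 V E" "u \<notin> V1 V E" using s u by (auto simp: V2_def)
  have split: "V - {s,u} = (V2 V E - {s,u}) \<union> V1 V E" using s1 V1sub by (auto simp: V2_def)
  have disj: "(V2 V E - {s,u}) \<inter> V1 V E = {}" by (auto simp: V2_def)
  have "delta V E s u = (\<Sum>t\<in>V2 V E - {s,u}. rr V E s t u) + (\<Sum>t\<in>V1 V E. rr V E s t u)"
    unfolding delta_rr split by (rule sum.union_disjoint) (use fin1 fin2 disj in auto)
  moreover have T1: "(\<Sum>t\<in>V2 V E - {s,u}. rr V E s t u) = tdelta V E s u"
  proof -
    have "(\<Sum>t\<in>V2 V E - {s,u}. rr V E s t u) = (\<Sum>t\<in>V2 V E - {s,u}. rr (V2 V E) E s t u)"
      by (rule sum.cong[OF refl]) (simp add: rr_V2[OF G C s])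
    then show ?thesis unfolding tdelta_def using su by (simp add: rr_def)
  qed
  moreover have "(\<Sum>t\<in>V1 V E. rr V E s t u) = (\<Sum>y\<in>V2 V E. real (deg1 V E y) * rr V E s y u)"
  proof -
    have "(\<Sum>t\<in>V1 V E. rr V E s t u) = (\<Sum>t\<in>V1 V E. \<Sum>y\<in>{y. y \<in> V2 V E \<and> E t y}. rr V E s y u)"
    proof (rule sum.cong[OF refl])
      fix t assume t: "t \<in> V1 V E"
      obtain y where eq: "{w\<in>V. E t w} = {y}" using V1_nb[OF t] by blast
      have "y \<in> {w\<in>V. E t w}" unfolding eq by simp
      then have ty: "E t y" by simp
      have yV2: "y \<in> V2 V E" using nb_V2[OF G C n3 t ty] .
      have "{y. y \<in> V2 V E \<and> E t y} = {y}"
      proof (rule set_eqI, rule iffI)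
        fix z assume "z \<in> {y. y \<in> V2 V E \<and> E t y}"
        then have "E t z" by simp
        then have "y = z" using V1_unique[OF G t ty] by simp
        then show "z \<in> {y}" by simp
      next
        fix z assume "z \<in> {y}" then show "z \<in> {y. y \<in> V2 V E \<and> E t y}" using yV2 ty by simp
      qed
      moreover have "t \<noteq> s" "t \<noteq> u" using t s1 by auto
      ultimately show "rr V E s t u = (\<Sum>y\<in>{y. y \<in> V2 V E \<and> E t y}. rr V E s y u)"
        using rr_snoc[OF G t ty] by simp
    qed
    also have "\<dots> = (\<Sum>y\<in>V2 V E. \<Sum>t\<in>{t. t \<in> V1 V E \<and> E t y}. rr V E s y u)"
      by (rule sum.swap_restrict[OF fin1 fin2])
    also have "\<dots> = (\<Sum>y\<in>V2 V E. real (deg1 V E y) * rr V E s y u)"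
    proof (rule sum.cong[OF refl])
      fix y assume y: "y \<in> V2 V E"
      have "{t. t \<in> V1 V E \<and> E t y} = {w \<in> V. E y w \<and> degree V E w = 1}"
      proof (rule set_eqI, rule iffI)
        fix z assume "z \<in> {t. t \<in> V1 V E \<and> E t y}"
        then have "z \<in> V1 V E" "E z y" by simp_all
        then show "z \<in> {w \<in> V. E y w \<and> degree V E w = 1}" using G_sym[OF G \<open>E z y\<close>] by (simp add: V1_def)
      next
        fix z assume "z \<in> {w \<in> V. E y w \<and> degree V E w = 1}"
        then have "z \<in> V" "E y z" "degree V E z = 1" by simp_all
        then show "z \<in> {t. t \<in> V1 V E \<and> E t y}" using G_sym[OF G \<open>E y z\<close>] by (simp add: V1_def)
      qed
      then show "(\<Sum>t\<in>{t. t \<in> V1 V E \<and> E t y}. rr V E s y u) = real (deg1 V E y) * rr V E s y u"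
        by (simp add: deg1_def)
    qed
    finally show ?thesis .
  qed
  moreover have "(\<Sum>y\<in>V2 V E. real (deg1 V E y) * rr V E s y u) = real (deg1 V E u) + zeta V E s u"
  proof -
    have sV: "s \<in> V" "u \<in> V" using s u V2sub by auto
    have e: "V2 V E = insert s (insert u (V2 V E - {s,u}))" using s u by auto
    have "(\<Sum>y\<in>V2 V E. real (deg1 V E y) * rr V E s y u)
        = real (deg1 V E s) * rr V E s s u + (real (deg1 V E u) * rr V E s u u
           + (\<Sum>y\<in>V2 V E - {s,u}. real (deg1 V E y) * rr V E s y u))"
      using fin2 su by (subst e) (simp add: sum.insert)
    also have "\<dots> = real (deg1 V E u) + (\<Sum>y\<in>V2 V E - {s,u}. real (deg1 V E y) * rr V E s y u)"
      using rr_self[OF sV(1) su[symmetric]] rr_end[OF G C sV] by simp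
    also have "(\<Sum>y\<in>V2 V E - {s,u}. real (deg1 V E y) * rr V E s y u) = zeta V E s u"
    proof -
      have "(\<Sum>y\<in>V2 V E - {s,u}. real (deg1 V E y) * rr V E s y u) = (\<Sum>y\<in>V2 V E - {s,u}. real (deg1 V E y) * rr (V2 V E) E s y u)"
        by (rule sum.cong[OF refl]) (simp add: rr_V2[OF G C s])
      then show ?thesis unfolding zeta_def using su by (simp add: rr_def)
    qed
    finally show ?thesis .
  qed
  ultimately show ?thesis by simp
qed


lemma G_irr: "simple_graph V E \<Longrightarrow> \<not> E x x"
  by (simp add: simple_graph_def)

lemma partB: assumes G: "simple_graph V E" and C: "connected_graph V E" and n3: "card V \<ge> 3"
  and u: "u \<in> V2 V E" and s: "s \<in> V1 V E" and nsu: "\<not> E s u" and sy: "E s y"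
  shows "delta V E s u = tdelta V E y u + zeta V E y u + real (deg1 V E u)"
proof -
  have fin: "finite V" using G_fin[OF G] .
  have y: "y \<in> V2 V E" using nb_V2[OF G C n3 s sy] .
  have yu: "y \<noteq> u" using nsu sy by auto
  have su: "s \<noteq> u" using s u by (auto simp: V2_def)
  have ys: "y \<noteq> s" using G_irr[OF G, of s] sy by auto
  have yV: "y \<in> V" and sV: "s \<in> V" using G_in[OF G sy] by auto
  have "delta V E s u = (\<Sum>t\<in>V-{s,u}. rr V E y t u)"
    unfolding delta_rr by (rule sum.cong[OF refl]) (use rr_cons[OF G s sy _ su[symmetric]] in auto)
  also have "V-{s,u} = insert y (V - {s,u,y})" using yV ys yu by auto
  also have "(\<Sum>t\<in>insert y (V - {s,u,y}). rr V E y t u) = rr V E y y u + (\<Sum>t\<in>V - {s,u,y}. rr V E y t u)"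
    using fin by (simp add: sum.insert)
  also have "rr V E y y u = 0" using rr_self[OF yV yu[symmetric]] .
  also have "(\<Sum>t\<in>V - {s,u,y}. rr V E y t u) = rr V E y s u + (\<Sum>t\<in>V - {s,u,y}. rr V E y t u)"
    using rr_snoc[OF G s sy ys su[symmetric]] rr_self[OF yV yu[symmetric]] by simp
  also have "\<dots> = (\<Sum>t\<in>insert s (V - {s,u,y}). rr V E y t u)"
    using fin by (simp add: sum.insert)
  also have "insert s (V - {s,u,y}) = V - {y,u}" using sV ys su by auto
  also have "(\<Sum>t\<in>V - {y,u}. rr V E y t u) = delta V E y u" by (simp add: delta_rr)
  finally show ?thesis using partA[OF G C n3 u y yu] by simp
qed

lemma partC: assumes G: "simple_graph V E" and C: "connected_graph V E" and n3: "card V \<ge> 3"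
  and u: "u \<in> V2 V E" and s: "s \<in> V1 V E" and su': "E s u"
  shows "delta V E s u = real (card V) - 2"
proof -
  have fin: "finite V" using G_fin[OF G] .
  have su: "s \<noteq> u" using s u by (auto simp: V2_def)
  have sV: "s \<in> V" "u \<in> V" using G_in[OF G su'] by auto
  have "delta V E s u = (\<Sum>t\<in>V-{s,u}. 1)"
    unfolding delta_rr
  proof (rule sum.cong[OF refl])
    fix t assume t: "t \<in> V - {s,u}"
    then have "rr V E s t u = rr V E u t u" using rr_cons[OF G s su'] su by auto
    also have "\<dots> = 1" using rr_start[OF G C sV(2)] t by auto
    finally show "rr V E s t u = 1" .
  qed
  also have "\<dots> = real (card (V - {s,u}))" by simp
  also have "card (V - {s,u}) = card V - 2" using sV su fin by (simp add: card_Diff_subset)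
  finally show ?thesis using n3 by simp
qed

lemma part0: assumes G: "simple_graph V E" and u: "u \<in> V1 V E" shows "bc V E u = 0"
proof -
  have "delta V E s u = 0" if "s \<in> V - {u}" for s
    unfolding delta_rr
  proof (rule sum.neutral, rule ballI)
    fix t assume "t \<in> V - {s, u}"
    then show "rr V E s t u = 0" using rr_V1[OF G u, of s t] that by auto
  qed
  then show ?thesis unfolding bc_def by simp
qed

theorem mainTheorem5:
  fixes V :: "'a set" and E :: "'a \<Rightarrow> 'a \<Rightarrow> bool"
  assumes "simple_graph V E"
    and "connected_graph V E"
    and "card V \<ge> 3"
  shows "(\<forall>u \<in> V1 V E. bc V E u = 0)
    \<and> (\<forall>u \<in> V2 V E. \<forall>s \<in> V - {u}.
          (s \<in> V2 V E \<longrightarrow>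
             delta V E s u = tdelta V E s u + zeta V E s u + real (deg1 V E u))
        \<and> (s \<in> V1 V E \<and> \<not> E s u \<longrightarrow> (\<forall>y. E s y \<longrightarrow>
             delta V E s u = tdelta V E y u + zeta V E y u + real (deg1 V E u)))
        \<and> (s \<in> V1 V E \<and> E s u \<longrightarrow> delta V E s u = real (card V) - 2))"
  using part0[OF assms(1)] partA[OF assms] partB[OF assms] partC[OF assms] by blast

end
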